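(* The Oracle Mechanism is oneway-truthful: for every seller $i$ with true cost $c_i$ and every vector $d$ of reported costs with $d_i>c_i$, we have $u_i(c_i,d_{-i})\ge u_i(d)$, where $u_i(\cdot)$ denotes seller $i$'s utility (payment received minus $c_i$ if $i$ is a winner, and payment received otherwise) when the mechanism is run on the given reported cost vector.
   Context: Sellers $S=\{1,\dots,n\}$ each own one indivisible item with a private true cost; the mechanism runs on reported costs $d$. The buyer's utility is a monotone submodular $F:2^S\to\mathbb R_{\ge0}$, budget $B>0$; $d(T)=\sum_{i\in T}d_i$. $F^\star=\max\{F(T):d(T)\le B\}$. Greedy sequence $\chi(F)=\langle x_1,\dots,x_n\rangle$ (w.r.t. reported costs): with $\chi_0=\emptyset$, $\chi_i=\{x_1,\dots,x_i\}$, $x_i$ maximizes $(F(\chi_{i-1}\cup\{s\})-F(\chi_{i-1}))/d_s$ over $s\notin\chi_{i-1}$ (ratio $+\infty$ if $d_s=0$; ties arbitrary); $\partial_i=F(\chi_i)-F(\chi_{i-1})$. Oracle Mechanism: compute $F^\star$, construct $\chi(F)$, let $k$ be the largest integer with $F(\chi_k)\le F^\star/2$, declare $\chi_k$ the winners, and pay each winner $x_j$ the amount $2r_{x_j}\partial_j$, where $r_s=B/F^\star_s$ and $F^\star_s=\max\{F(T):T\subseteq S\setminus\{s\},d(T)\le B\}$; losers are paid $0$. *)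

theory Defs
  imports "HOL-Library.Extended_Real"
begin

text \<open>Sellers are 1..n. F : nat set => real is the buyer's utility, d : nat => real
  the reported cost vector, B the budget.\<close>

definition cost :: "(nat \<Rightarrow> real) \<Rightarrow> nat set \<Rightarrow> real" where
  "cost d T = (\<Sum>i\<in>T. d i)"

definition Fstar :: "nat \<Rightarrow> (nat set \<Rightarrow> real) \<Rightarrow> real \<Rightarrow> (nat \<Rightarrow> real) \<Rightarrow> real" where
  "Fstar n F B d = Max {F T | T. T \<subseteq> {1..n} \<and> cost d T \<le> B}"

definition Fstar_excl :: "nat \<Rightarrow> (nat set \<Rightarrow> real) \<Rightarrow> real \<Rightarrow> (nat \<Rightarrow> real) \<Rightarrow> nat \<Rightarrow> real" where
  "Fstar_excl n F B d s = Max {F T | T. T \<subseteq> {1..n} - {s} \<and> cost d T \<le> B}"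

definition ratio :: "(nat set \<Rightarrow> real) \<Rightarrow> (nat \<Rightarrow> real) \<Rightarrow> nat set \<Rightarrow> nat \<Rightarrow> ereal" where
  "ratio F d A s = (if d s = 0 then \<infinity> else ereal ((F (insert s A) - F A) / d s))"

definition greedy_next :: "nat \<Rightarrow> (nat set \<Rightarrow> real) \<Rightarrow> (nat \<Rightarrow> real) \<Rightarrow> nat set \<Rightarrow> nat" where
  "greedy_next n F d A = (LEAST s. s \<in> {1..n} - A \<and>
      (\<forall>t\<in>{1..n} - A. ratio F d A t \<le> ratio F d A s))"

fun chi :: "nat \<Rightarrow> (nat set \<Rightarrow> real) \<Rightarrow> (nat \<Rightarrow> real) \<Rightarrow> nat \<Rightarrow> nat set" where
  "chi n F d 0 = {}"
| "chi n F d (Suc j) = insert (greedy_next n F d (chi n F d j)) (chi n F d j)"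

text \<open>x_j, the j-th greedy element (j >= 1).\<close>
definition gx :: "nat \<Rightarrow> (nat set \<Rightarrow> real) \<Rightarrow> (nat \<Rightarrow> real) \<Rightarrow> nat \<Rightarrow> nat" where
  "gx n F d j = greedy_next n F d (chi n F d (j - 1))"

definition marg :: "nat \<Rightarrow> (nat set \<Rightarrow> real) \<Rightarrow> (nat \<Rightarrow> real) \<Rightarrow> nat \<Rightarrow> real" where
  "marg n F d j = F (chi n F d j) - F (chi n F d (j - 1))"

definition kcut :: "nat \<Rightarrow> (nat set \<Rightarrow> real) \<Rightarrow> real \<Rightarrow> (nat \<Rightarrow> real) \<Rightarrow> nat" where
  "kcut n F B d = (let K = {j\<in>{0..n}. F (chi n F d j) \<le> Fstar n F B d / 2}
                    in if K = {} then 0 else Max K)"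

definition winner :: "nat \<Rightarrow> (nat set \<Rightarrow> real) \<Rightarrow> real \<Rightarrow> (nat \<Rightarrow> real) \<Rightarrow> nat \<Rightarrow> bool" where
  "winner n F B d i = (\<exists>j\<in>{1..kcut n F B d}. gx n F d j = i)"

definition payment :: "nat \<Rightarrow> (nat set \<Rightarrow> real) \<Rightarrow> real \<Rightarrow> (nat \<Rightarrow> real) \<Rightarrow> nat \<Rightarrow> real" where
  "payment n F B d i =
     (if winner n F B d i then
        2 * (B / Fstar_excl n F B d i) *
          marg n F d (THE j. j \<in> {1..kcut n F B d} \<and> gx n F d j = i)
      else 0)"

definition utility :: "nat \<Rightarrow> (nat set \<Rightarrow> real) \<Rightarrow> real \<Rightarrow> (nat \<Rightarrow> real) \<Rightarrow> nat \<Rightarrow> real \<Rightarrow> real" where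
  "utility n F B d i c = payment n F B d i - (if winner n F B d i then c else 0)"

end

theory Submission
  imports Defs
begin

lemma greedy_spec:
  assumes "A \<subseteq> {1..n}" "{1..n} - A \<noteq> {}"
  shows "greedy_next n F e A \<in> {1..n} - A \<and>
         (\<forall>t\<in>{1..n}-A. ratio F e A t \<le> ratio F e A (greedy_next n F e A))"
proof -
  let ?M = "Max (ratio F e A ` ({1..n} - A))"
  have fin: "finite (ratio F e A ` ({1..n} - A))" by simp
  have "?M \<in> ratio F e A ` ({1..n} - A)" using assms(2) fin by (intro Max_in) auto
  then obtain s where s: "s \<in> {1..n} - A" "ratio F e A s = ?M" by auto
  have "\<forall>t\<in>{1..n}-A. ratio F e A t \<le> ratio F e A s"
    using s(2) fin by auto
  then have P: "s \<in> {1..n} - A \<and> (\<forall>t\<in>{1..n}-A. ratio F e A t \<le> ratio F e A s)"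
    using s(1) by auto
  show ?thesis unfolding greedy_next_def by (rule LeastI[of _ s]) (rule P)
qed

lemma chi_sub:
  "j \<le> n \<Longrightarrow> chi n F e j \<subseteq> {1..n} \<and> card (chi n F e j) = j \<and> finite (chi n F e j)"
proof (induction j)
  case 0 then show ?case by simp
next
  case (Suc j)
  then have IH: "chi n F e j \<subseteq> {1..n}" "card (chi n F e j) = j" "finite (chi n F e j)" by auto
  have "{1..n} - chi n F e j \<noteq> {}"
  proof
    assume "{1..n} - chi n F e j = {}"
    then have "{1..n} \<subseteq> chi n F e j" by auto
    then have "card {1..n} \<le> card (chi n F e j)" using IH(3) by (rule card_mono[rotated])
    then show False using Suc.prems IH(2) by simp
  qed
  from greedy_spec[OF IH(1) this] have "greedy_next n F e (chi n F e j) \<in> {1..n} - chi n F e j" by blast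
  then show ?case using IH by auto
qed

lemma chi_mono: "j \<le> j' \<Longrightarrow> chi n F e j \<subseteq> chi n F e j'"
proof (induction j' rule: dec_induct)
  case base then show ?case by simp
next
  case (step m) then show ?case by auto
qed

lemma gx_spec:
  assumes "1 \<le> j" "j \<le> n"
  shows "gx n F e j \<in> {1..n} - chi n F e (j - 1) \<and>
         chi n F e j = insert (gx n F e j) (chi n F e (j - 1)) \<and>
         (\<forall>t\<in>{1..n} - chi n F e (j-1). ratio F e (chi n F e (j-1)) t \<le> ratio F e (chi n F e (j-1)) (gx n F e j))"
proof -
  obtain m where m: "j = Suc m" using assms by (cases j) auto
  have "Suc m \<le> n" using assms m by simp
  then have c: "chi n F e (Suc m) \<subseteq> {1..n}" "card (chi n F e (Suc m)) = Suc m"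
    and c2: "chi n F e m \<subseteq> {1..n}" "card (chi n F e m) = m" "finite (chi n F e m)"
    using chi_sub[of "Suc m" n F e] chi_sub[of m n F e] by auto
  have ne: "{1..n} - chi n F e m \<noteq> {}"
  proof
    assume "{1..n} - chi n F e m = {}"
    then have "{1..n} \<subseteq> chi n F e m" by auto
    then have "card {1..n} \<le> card (chi n F e m)" using c2(3) by (rule card_mono[rotated])
    then show False using \<open>Suc m \<le> n\<close> c2(2) by simp
  qed
  show ?thesis using greedy_spec[OF c2(1) ne] m unfolding gx_def by simp
qed

lemma gx_inj:
  assumes "1 \<le> j" "j < j'" "j' \<le> n"
  shows "gx n F e j \<noteq> gx n F e j'"
proof -
  have "gx n F e j \<in> chi n F e j" using gx_spec[of j n F e] assms by auto
  also have "\<dots> \<subseteq> chi n F e (j' - 1)" using assms by (intro chi_mono) auto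
  finally show ?thesis using gx_spec[of j' n F e] assms by auto
qed

lemma gx_inj':
  assumes "j \<in> {1..n}" "j' \<in> {1..n}" "gx n F e j = gx n F e j'"
  shows "j = j'"
  using gx_inj[of j j' n F e] gx_inj[of j' j n F e] assms
  by (metis atLeastAtMost_iff linorder_neqE_nat)

lemma chi_image: "j \<le> n \<Longrightarrow> chi n F e j = gx n F e ` {1..j}"
proof (induction j)
  case 0 then show ?case by simp
next
  case (Suc j)
  have "chi n F e (Suc j) = insert (gx n F e (Suc j)) (chi n F e j)"
    using gx_spec[of "Suc j" n F e] Suc.prems by simp
  also have "\<dots> = gx n F e ` {1..Suc j}" using Suc by (auto simp: atLeastAtMostSuc_conv)
  finally show ?case .
qed

lemma gx_exists:
  assumes "s \<in> {1..n}"
  shows "\<exists>j\<in>{1..n}. gx n F e j = s"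
proof -
  have "chi n F e n \<subseteq> {1..n}" "card (chi n F e n) = n" using chi_sub[of n n F e] by auto
  then have "chi n F e n = {1..n}" by (intro card_subset_eq) auto
  then have "s \<in> gx n F e ` {1..n}" using chi_image[of n n F e] assms by auto
  then show ?thesis by blast
qed


lemma Fstar_props:
  assumes "B \<ge> 0"
  shows "\<exists>T. T \<subseteq> {1..n} \<and> cost e T \<le> B \<and> Fstar n F B e = F T"
    and "T \<subseteq> {1..n} \<Longrightarrow> cost e T \<le> B \<Longrightarrow> F T \<le> Fstar n F B e"
proof -
  let ?X = "{F T | T. T \<subseteq> {1..n} \<and> cost e T \<le> B}"
  have fin: "finite ?X" by (rule finite_image_set) simp
  have ne: "?X \<noteq> {}" using assms by (auto intro!: exI[of _ "{}"] simp: cost_def)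
  have "Max ?X \<in> ?X" using fin ne by (rule Max_in)
  then show "\<exists>T. T \<subseteq> {1..n} \<and> cost e T \<le> B \<and> Fstar n F B e = F T"
    unfolding Fstar_def by auto
  show "T \<subseteq> {1..n} \<Longrightarrow> cost e T \<le> B \<Longrightarrow> F T \<le> Fstar n F B e"
    unfolding Fstar_def using fin by (intro Max_ge) auto
qed

lemma Fex_props:
  assumes "B \<ge> 0"
  shows "\<exists>T. T \<subseteq> {1..n} - {s} \<and> cost e T \<le> B \<and> Fstar_excl n F B e s = F T"
    and "T \<subseteq> {1..n} - {s} \<Longrightarrow> cost e T \<le> B \<Longrightarrow> F T \<le> Fstar_excl n F B e s"
proof -
  let ?X = "{F T | T. T \<subseteq> {1..n} - {s} \<and> cost e T \<le> B}"
  have fin: "finite ?X" by (rule finite_image_set) simp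
  have ne: "?X \<noteq> {}" using assms by (auto intro!: exI[of _ "{}"] simp: cost_def)
  have "Max ?X \<in> ?X" using fin ne by (rule Max_in)
  then show "\<exists>T. T \<subseteq> {1..n} - {s} \<and> cost e T \<le> B \<and> Fstar_excl n F B e s = F T"
    unfolding Fstar_excl_def by auto
  show "T \<subseteq> {1..n} - {s} \<Longrightarrow> cost e T \<le> B \<Longrightarrow> F T \<le> Fstar_excl n F B e s"
    unfolding Fstar_excl_def using fin by (intro Max_ge) auto
qed

lemma kcut_eq: "kcut n F B e = (if {j\<in>{0..n}. F (chi n F e j) \<le> Fstar n F B e / 2} = {} then 0
   else Max {j\<in>{0..n}. F (chi n F e j) \<le> Fstar n F B e / 2})"
  by (simp only: kcut_def Let_def)

lemma kcut_le: "kcut n F B e \<le> n"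
proof -
  let ?K = "{j\<in>{0..n}. F (chi n F e j) \<le> Fstar n F B e / 2}"
  show ?thesis
  proof (cases "?K = {}")
    case True then show ?thesis by (simp only: kcut_eq) simp
  next
    case False
    then have "Max ?K \<in> ?K" by (intro Max_in) auto
    then show ?thesis using False by (simp only: kcut_eq if_False) auto
  qed
qed

lemma kcut_in:
  fixes F :: "nat set \<Rightarrow> real"
  assumes F_mono: "\<forall>A A'. A \<subseteq> A' \<and> A' \<subseteq> {1..n} \<longrightarrow> F A \<le> F A'"
    and "1 \<le> j" "j \<le> kcut n F B e"
  shows "F (chi n F e j) \<le> Fstar n F B e / 2"
proof -
  let ?K = "{j\<in>{0..n}. F (chi n F e j) \<le> Fstar n F B e / 2}"
  have "?K \<noteq> {}"
  proof
    assume "?K = {}"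
    then have "kcut n F B e = 0" by (simp only: kcut_eq) simp
    then show False using assms(2,3) by simp
  qed
  then have km: "kcut n F B e = Max ?K" by (simp only: kcut_eq if_False)
  have "Max ?K \<in> ?K" using \<open>?K \<noteq> {}\<close> by (intro Max_in) auto
  then have k: "kcut n F B e \<le> n" "F (chi n F e (kcut n F B e)) \<le> Fstar n F B e / 2" using km by auto
  have "F (chi n F e j) \<le> F (chi n F e (kcut n F B e))"
    using F_mono chi_mono[OF assms(3), of n F e] chi_sub[OF k(1), of F e] by blast
  then show ?thesis using k by simp
qed

lemma kcut_ge:
  assumes "j \<le> n" "F (chi n F e j) \<le> Fstar n F B e / 2"
  shows "j \<le> kcut n F B e"
proof -
  let ?K = "{j\<in>{0..n}. F (chi n F e j) \<le> Fstar n F B e / 2}"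
  have "j \<in> ?K" using assms by auto
  then have "?K \<noteq> {}" by auto
  then have km: "kcut n F B e = Max ?K" by (simp only: kcut_eq if_False)
  show ?thesis unfolding km using \<open>j \<in> ?K\<close> by (intro Max_ge) auto
qed

lemma payment_at:
  assumes "1 \<le> j" "j \<le> kcut n F B e" "gx n F e j = i"
  shows "winner n F B e i \<and> payment n F B e i = 2 * (B / Fstar_excl n F B e i) * marg n F e j"
proof -
  have w: "winner n F B e i" using assms by (auto simp: winner_def)
  have kn: "kcut n F B e \<le> n" by (rule kcut_le)
  have "(THE j. j \<in> {1..kcut n F B e} \<and> gx n F e j = i) = j"
  proof (rule the_equality)
    show "j \<in> {1..kcut n F B e} \<and> gx n F e j = i" using assms by auto
    fix j' assume "j' \<in> {1..kcut n F B e} \<and> gx n F e j' = i"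
    then show "j' = j" using gx_inj'[of j' n j F e] assms kn by auto
  qed
  then show ?thesis using w by (simp add: payment_def)
qed

lemma submod_sum:
  fixes F :: "nat set \<Rightarrow> real"
  assumes F_submod: "\<forall>A A'. A \<subseteq> {1..n} \<and> A' \<subseteq> {1..n} \<longrightarrow>
                      F (A \<union> A') + F (A \<inter> A') \<le> F A + F A'"
    and "finite T" "T \<subseteq> {1..n}" "X \<subseteq> {1..n}"
  shows "F (X \<union> T) \<le> F X + (\<Sum>y\<in>T. F (insert y X) - F X)"
  using assms(2,3)
proof (induction T rule: finite_induct)
  case empty then show ?case by simp
next
  case (insert y T)
  have s: "F (insert y X \<union> (X \<union> T)) + F (insert y X \<inter> (X \<union> T)) \<le> F (insert y X) + F (X \<union> T)"
    using F_submod insert.prems assms(4) by (metis Un_subset_iff insert_subset)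
  have e1: "insert y X \<union> (X \<union> T) = X \<union> insert y T" by auto
  have e2: "insert y X \<inter> (X \<union> T) = X" using insert.hyps by auto
  have "F (X \<union> T) \<le> F X + (\<Sum>y\<in>T. F (insert y X) - F X)" using insert by auto
  then show ?case using s e1 e2 insert.hyps by simp
qed

lemma greedy_bound:
  fixes F :: "nat set \<Rightarrow> real"
  assumes F_mono: "\<forall>A A'. A \<subseteq> A' \<and> A' \<subseteq> {1..n} \<longrightarrow> F A \<le> F A'"
    and F_submod: "\<forall>A A'. A \<subseteq> {1..n} \<and> A' \<subseteq> {1..n} \<longrightarrow>
                      F (A \<union> A') + F (A \<inter> A') \<le> F A + F A'"
    and X: "X \<subseteq> {1..n}" and Opt: "Opt \<subseteq> {1..n}"
    and e: "\<forall>j\<in>{1..n}. e j \<ge> 0" and rho: "\<rho> \<ge> 0"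
    and m: "\<forall>y\<in>Opt - X. F (insert y X) - F X \<le> \<rho> * e y"
  shows "F Opt \<le> F X + \<rho> * cost e Opt"
proof -
  have finO: "finite Opt" using Opt finite_subset by blast
  have "F Opt \<le> F (X \<union> (Opt - X))" using F_mono X Opt by auto
  also have "\<dots> \<le> F X + (\<Sum>y\<in>Opt - X. F (insert y X) - F X)"
    using submod_sum[OF F_submod, of "Opt - X" X] finO Opt X by auto
  also have "\<dots> \<le> F X + (\<Sum>y\<in>Opt - X. \<rho> * e y)"
    using m by (intro add_left_mono sum_mono) auto
  also have "(\<Sum>y\<in>Opt - X. \<rho> * e y) \<le> (\<Sum>y\<in>Opt. \<rho> * e y)"
    using finO Opt e rho by (intro sum_mono2) auto
  also have "(\<Sum>y\<in>Opt. \<rho> * e y) = \<rho> * cost e Opt" by (simp add: cost_def sum_distrib_left)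
  finally show ?thesis by simp
qed

lemma greedy_same:
  assumes "A \<subseteq> {1..n}" "{1..n} - A \<noteq> {}"
    and ne: "greedy_next n F d' A \<noteq> i"
    and eq: "\<forall>t. t \<noteq> i \<longrightarrow> ratio F d A t = ratio F d' A t"
    and le: "ratio F d A i \<le> ratio F d' A i"
  shows "greedy_next n F d A = greedy_next n F d' A"
proof -
  let ?s = "greedy_next n F d' A"
  have sp: "?s \<in> {1..n} - A" "\<forall>t\<in>{1..n}-A. ratio F d' A t \<le> ratio F d' A ?s"
    using greedy_spec[OF assms(1,2), of F d'] by auto
  have rs: "ratio F d A ?s = ratio F d' A ?s" using eq ne by auto
  have Ps: "?s \<in> {1..n} - A \<and> (\<forall>t\<in>{1..n}-A. ratio F d A t \<le> ratio F d A ?s)"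
  proof -
    have "ratio F d A t \<le> ratio F d A ?s" if "t \<in> {1..n}-A" for t
    proof (cases "t = i")
      case True then show ?thesis using le sp(2) that rs by (metis order_trans)
    next
      case False then show ?thesis using eq sp(2) that rs by auto
    qed
    then show ?thesis using sp(1) by auto
  qed
  show ?thesis unfolding greedy_next_def[of n F d A]
  proof (rule Least_equality)
    show "?s \<in> {1..n} - A \<and> (\<forall>t\<in>{1..n}-A. ratio F d A t \<le> ratio F d A ?s)"
      using Ps by simp
    fix y assume Py: "y \<in> {1..n} - A \<and> (\<forall>t\<in>{1..n}-A. ratio F d A t \<le> ratio F d A y)"
    have "y \<in> {1..n} - A \<and> (\<forall>t\<in>{1..n}-A. ratio F d' A t \<le> ratio F d' A y) \<or>
          (y = i \<and> i \<in> {1..n} - A \<and> (\<forall>t\<in>{1..n}-A. ratio F d' A t \<le> ratio F d' A i))"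
    proof (cases "y = i")
      case True
      have "ratio F d' A ?s = ratio F d A ?s" using rs by simp
      also have "\<dots> \<le> ratio F d A i" using Py True sp(1) by auto
      also have "\<dots> \<le> ratio F d' A i" by (rule le)
      finally have "ratio F d' A ?s \<le> ratio F d' A i" .
      then show ?thesis using True Py sp(2) by (auto intro: order_trans)
    next
      case False
      have "ratio F d' A t \<le> ratio F d' A y" if t: "t \<in> {1..n}-A" for t
      proof (cases "t = i")
        case True
        have "ratio F d' A i \<le> ratio F d' A ?s" using sp(2) t True by auto
        also have "\<dots> = ratio F d A ?s" using rs by simp
        also have "\<dots> \<le> ratio F d A y" using Py sp(1) by auto
        also have "\<dots> = ratio F d' A y" using eq False by auto
        finally show ?thesis using True by simp
      next
        case False2: False
        have "ratio F d A t \<le> ratio F d A y" using Py t by blast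
        then show ?thesis using eq False2 False by metis
      qed
      then show ?thesis using Py by auto
    qed
    then show "?s \<le> y" unfolding greedy_next_def by (auto intro: Least_le)
  qed
qed


lemma ratio_le_lower:
  fixes F :: "nat set \<Rightarrow> real"
  assumes "F A \<le> F (insert i A)" "c \<ge> 0" "d i > c"
  shows "ratio F d A i \<le> ratio F (d(i := c)) A i"
proof (cases "c = 0")
  case True then show ?thesis by (simp add: ratio_def)
next
  case False
  then have c: "c > 0" using assms by simp
  have "(F (insert i A) - F A) / d i \<le> (F (insert i A) - F A) / c"
    using assms c by (intro divide_left_mono) auto
  then show ?thesis using c assms by (simp add: ratio_def)
qed

theorem lemma16:
  fixes n :: nat and F :: "nat set \<Rightarrow> real" and B :: real
    and d :: "nat \<Rightarrow> real" and i :: nat and c :: real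
  assumes B_pos: "B > 0"
    and F_nonneg: "\<forall>A. A \<subseteq> {1..n} \<longrightarrow> F A \<ge> 0"
    and F_mono: "\<forall>A A'. A \<subseteq> A' \<and> A' \<subseteq> {1..n} \<longrightarrow> F A \<le> F A'"
    and F_submod: "\<forall>A A'. A \<subseteq> {1..n} \<and> A' \<subseteq> {1..n} \<longrightarrow>
                      F (A \<union> A') + F (A \<inter> A') \<le> F A + F A'"
    and d_nonneg: "\<forall>j\<in>{1..n}. d j \<ge> 0"
    and i_in: "i \<in> {1..n}"
    and c_nonneg: "c \<ge> 0"
    and over: "d i > c"
  shows "utility n F B (d(i := c)) i c \<ge> utility n F B d i c"
proof -
  define d' where "d' = d(i := c)"
  have d'nn: "\<forall>j\<in>{1..n}. d' j \<ge> 0" using d_nonneg c_nonneg by (simp add: d'_def)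
  have dd': "\<And>t. t \<noteq> i \<Longrightarrow> d' t = d t" and d'i: "d' i = c" by (auto simp: d'_def)
  have d'le: "\<And>t. d' t \<le> d t" using over by (simp add: d'_def)
  have B0: "B \<ge> 0" using B_pos by simp
  have Fsub: "\<And>A A'. A \<subseteq> A' \<Longrightarrow> A' \<subseteq> {1..n} \<Longrightarrow> F A \<le> F A'" using F_mono by blast
  have Fins: "\<And>A x. A \<subseteq> {1..n} \<Longrightarrow> x \<in> {1..n} \<Longrightarrow> F A \<le> F (insert x A)"
    by (rule Fsub) auto
  obtain j where j: "j \<in> {1..n}" "gx n F d' j = i" using gx_exists[OF i_in] by blast
  define X where "X = chi n F d' (j - 1)"
  have gs: "i \<in> {1..n} - X" "chi n F d' j = insert i X"
    "\<forall>t\<in>{1..n} - X. ratio F d' X t \<le> ratio F d' X i"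
    using gx_spec[of j n F d'] j unfolding X_def by auto
  have Xsub: "X \<subseteq> {1..n}"
  proof -
    have "j - 1 \<le> n" using j by auto
    then show ?thesis unfolding X_def using chi_sub[of "j-1" n F d'] by blast
  qed
  have ratio_eq: "\<And>A t. t \<noteq> i \<Longrightarrow> ratio F d A t = ratio F d' A t"
    by (simp add: ratio_def dd')
  have prefix: "m \<le> j - 1 \<Longrightarrow> chi n F d m = chi n F d' m" for m
  proof (induction m)
    case 0 then show ?case by simp
  next
    case (Suc m)
    let ?A = "chi n F d' m"
    have eqm: "chi n F d m = ?A" using Suc by simp
    have smn: "Suc m \<le> n" "m \<le> n" "1 \<le> Suc m" using Suc.prems j by auto
    have sm: "gx n F d' (Suc m) \<in> {1..n} - ?A" "?A \<subseteq> {1..n}"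
      using gx_spec[OF smn(3,1), of F d'] chi_sub[OF smn(2), of F d'] by auto
    have ne: "greedy_next n F d' ?A \<noteq> i"
      using gx_inj[of "Suc m" j n F d'] Suc.prems j by (auto simp: gx_def)
    have "F ?A \<le> F (insert i ?A)" using F_mono[rule_format, of ?A "insert i ?A"] sm(2) i_in by auto
    then have le: "ratio F d ?A i \<le> ratio F d' ?A i"
      unfolding d'_def using c_nonneg over by (rule ratio_le_lower)
    have "greedy_next n F d ?A = greedy_next n F d' ?A"
    proof (rule greedy_same[OF sm(2) _ ne _ le])
      show "{1..n} - ?A \<noteq> {}" using sm(1) by blast
      show "\<forall>t. t \<noteq> i \<longrightarrow> ratio F d ?A t = ratio F d' ?A t" using ratio_eq by blast
    qed
    then show ?case using eqm by simp
  qed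
  have chiX: "chi n F d (j - 1) = X" using prefix X_def by simp
  have pos_ge: "j \<le> p" if p: "p \<in> {1..n}" "gx n F d p = i" for p
  proof (rule ccontr)
    assume "\<not> j \<le> p"
    then have "p \<le> j - 1" by simp
    have "i \<in> chi n F d p" using gx_spec[of p n F d] p by auto
    also have "\<dots> = chi n F d' p" using prefix \<open>p \<le> j - 1\<close> by simp
    also have "\<dots> \<subseteq> X" unfolding X_def using \<open>p \<le> j - 1\<close> by (rule chi_mono)
    finally show False using gs(1) by simp
  qed
  define D where "D = F (insert i X) - F X"
  have D0: "D \<ge> 0" unfolding D_def using Fins[OF Xsub i_in] by auto
  have margj: "marg n F d' j = D" unfolding marg_def D_def X_def using gs(2) X_def by simp
  have costeq: "\<forall>T. T \<subseteq> {1..n} - {i} \<longrightarrow> cost d T = cost d' T"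
    unfolding cost_def using dd' by (auto intro!: sum.cong) (metis DiffE insertI1 subsetD)
  have Fexeq: "Fstar_excl n F B d i = Fstar_excl n F B d' i"
  proof -
    have "{F T | T. T \<subseteq> {1..n} - {i} \<and> cost d T \<le> B} = {F T | T. T \<subseteq> {1..n} - {i} \<and> cost d' T \<le> B}"
      using costeq by (smt (verit) Collect_cong)
    then show ?thesis unfolding Fstar_excl_def by simp
  qed
  define Fex where "Fex = Fstar_excl n F B d' i"
  have Fex0: "Fex \<ge> 0"
  proof -
    have "F {} \<le> Fex" unfolding Fex_def using B0 by (intro Fex_props(2)) (auto simp: cost_def)
    then show ?thesis using F_nonneg by force
  qed
  have Fs0: "Fstar n F B d \<ge> 0"
  proof -
    have "F {} \<le> Fstar n F B d" using B0 by (intro Fstar_props(2)) (auto simp: cost_def)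
    then show ?thesis using F_nonneg by force
  qed
  have Fsle: "Fstar n F B d \<le> Fstar n F B d'"
  proof -
    obtain T where T: "T \<subseteq> {1..n}" "cost d T \<le> B" "Fstar n F B d = F T"
      using Fstar_props(1)[OF B0, where n=n and F=F and e=d] by blast
    have "cost d' T \<le> cost d T" unfolding cost_def using d'le by (intro sum_mono) auto
    then show ?thesis using T B0 Fstar_props(2)[OF B0, where e=d' and T=T and n=n and F=F] by fastforce
  qed
  show ?thesis
  proof (cases "winner n F B d i")
    case True
    then obtain p where p: "p \<in> {1..kcut n F B d}" "gx n F d p = i" by (auto simp: winner_def)
    have pn: "p \<le> n" using p kcut_le[of n F B d] by auto
    have jp: "j \<le> p" using pos_ge p pn by auto
    define Y where "Y = chi n F d (p - 1)"
    have XY: "X \<subseteq> Y" unfolding Y_def using chiX[symmetric] chi_mono[of "j-1" "p-1" n F d] jp by auto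
    have gp: "i \<notin> Y" "chi n F d p = insert i Y"
      using gx_spec[of p n F d] p pn unfolding Y_def by auto
    have Ysub: "Y \<subseteq> {1..n}" unfolding Y_def using chi_sub[of "p-1" n F d] pn by auto
    have "F (chi n F d' j) = F (insert i X)" using gs(2) by simp
    also have "\<dots> \<le> F (insert i Y)" using XY Ysub i_in by (intro Fsub) auto
    also have "\<dots> = F (chi n F d p)" using gp by simp
    also have "\<dots> \<le> Fstar n F B d / 2" using kcut_in[OF F_mono, of p B d] p by auto
    also have "\<dots> \<le> Fstar n F B d' / 2" using Fsle by simp
    finally have "j \<le> kcut n F B d'" using j by (intro kcut_ge) auto
    then have pay': "winner n F B d' i \<and> payment n F B d' i = 2 * (B / Fex) * D"
      using payment_at[of j n F B d' i] j margj Fex_def by auto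
    have pay: "payment n F B d i = 2 * (B / Fex) * (F (insert i Y) - F Y)"
      using payment_at[of p n F B d i] p Fexeq Fex_def gp by (auto simp: marg_def Y_def)
    have sm: "F (insert i X \<union> Y) + F (insert i X \<inter> Y) \<le> F (insert i X) + F Y"
      using F_submod[rule_format, of "insert i X" Y] Xsub Ysub i_in by auto
    have "insert i X \<union> Y = insert i Y" "insert i X \<inter> Y = X" using XY gp by auto
    then have "F (insert i Y) - F Y \<le> D" using sm unfolding D_def by simp
    then have "2 * (B / Fex) * (F (insert i Y) - F Y) \<le> 2 * (B / Fex) * D"
      using B0 Fex0 by (intro mult_left_mono) auto
    then show ?thesis using pay pay' True unfolding utility_def d'_def by simp
  next
    case False
    then have u0: "utility n F B d i c = 0" by (simp add: utility_def payment_def)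
    show ?thesis
    proof (cases "winner n F B d' i")
      case False
      then show ?thesis using u0 unfolding utility_def payment_def d'_def by simp
    next
      case True
      then obtain j' where j': "j' \<in> {1..kcut n F B d'}" "gx n F d' j' = i" by (auto simp: winner_def)
      have "j' = j" using gx_inj'[of j' n j F d'] j j' kcut_le[of n F B d'] by auto
      then have jk: "j \<le> kcut n F B d'" using j' by simp
      then have pay': "payment n F B d' i = 2 * (B / Fex) * D"
        using payment_at[of j n F B d' i] j margj Fex_def by auto
      have "c \<le> 2 * (B / Fex) * D"
      proof (cases "c = 0")
        case True
        have "0 \<le> 2 * (B / Fex) * D" using B0 Fex0 D0 by (intro mult_nonneg_nonneg divide_nonneg_nonneg) auto
        then show ?thesis using True by (simp only:)
      next
        case False
        then have c0: "c > 0" using c_nonneg by simp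
        define \<rho> where "\<rho> = D / c"
        have rho0: "\<rho> \<ge> 0" unfolding \<rho>_def using D0 c0 by simp
        have ri: "ratio F d' X i = ereal \<rho>" unfolding ratio_def \<rho>_def D_def using d'i c0 by simp
        have mb: "\<forall>y\<in>{1..n} - X. F (insert y X) - F X \<le> \<rho> * d' y"
        proof
          fix y assume y: "y \<in> {1..n} - X"
          have r: "ratio F d' X y \<le> ereal \<rho>" using gs(3) y ri by auto
          have "d' y \<noteq> 0"
          proof
            assume "d' y = 0" then show False using r by (simp add: ratio_def)
          qed
          then have dy: "d' y > 0" using d'nn y by force
          have "(F (insert y X) - F X) / d' y \<le> \<rho>" using r dy by (simp add: ratio_def)
          then show "F (insert y X) - F X \<le> \<rho> * d' y" using dy by (simp add: pos_divide_le_eq mult.commute)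
        qed
        obtain O1 where O1: "O1 \<subseteq> {1..n}" "cost d' O1 \<le> B" "Fstar n F B d' = F O1"
          using Fstar_props(1)[OF B0, where n=n and F=F and e=d'] by blast
        obtain O2 where O2: "O2 \<subseteq> {1..n} - {i}" "cost d' O2 \<le> B" "Fex = F O2"
          using Fex_props(1)[OF B0, where n=n and F=F and e=d' and s=i] unfolding Fex_def by blast
        have "F O1 \<le> F X + \<rho> * cost d' O1"
          using greedy_bound[OF F_mono F_submod Xsub O1(1) d'nn rho0] mb O1 by blast
        also have "\<dots> \<le> F X + \<rho> * B" using O1(2) rho0 by (intro add_left_mono mult_left_mono) auto
        finally have b1: "Fstar n F B d' \<le> F X + \<rho> * B" using O1 by simp
        have "F O2 \<le> F X + \<rho> * cost d' O2"
          using greedy_bound[OF F_mono F_submod Xsub _ d'nn rho0, of O2] mb O2 by blast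
        also have "\<dots> \<le> F X + \<rho> * B" using O2(2) rho0 by (intro add_left_mono mult_left_mono) auto
        finally have b2: "Fex \<le> F X + \<rho> * B" using O2 by simp
        have b3: "F (insert i X) \<le> Fstar n F B d' / 2"
          using kcut_in[OF F_mono, of j B d'] jk j gs(2) by auto
        have cr: "c * \<rho> = D" unfolding \<rho>_def using c0 by simp
        show ?thesis
        proof (cases "Fex = 0")
          case False
          then have Fp: "Fex > 0" using Fex0 by simp
          have "Fex \<le> 2 * \<rho> * B" using b1 b2 b3 D0 unfolding D_def by linarith
          then have "c * Fex \<le> c * (2 * \<rho> * B)" using c0 by (intro mult_left_mono) auto
          also have "\<dots> = 2 * B * D" using cr by (simp add: algebra_simps)
          finally have "c * Fex \<le> 2 * B * D" .
          then show ?thesis using Fp by (simp add: pos_le_divide_eq field_simps)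
        next
          case True
          have FsD: "Fstar n F B d' \<le> F (insert i X)"
          proof (cases "i \<in> O1")
            case True
            have "cost d' (O1 - {i}) \<le> cost d' O1" unfolding cost_def
              using O1(1) d'nn by (intro sum_mono2) (auto intro: finite_subset)
            then have "F (O1 - {i}) \<le> Fex" unfolding Fex_def using O1 B0
              by (intro Fex_props(2)) auto
            moreover have "F ((O1 - {i}) \<union> {i}) + F ((O1 - {i}) \<inter> {i}) \<le> F (O1 - {i}) + F {i}"
              using F_submod[rule_format, of "O1 - {i}" "{i}"] O1(1) i_in by auto
            moreover have "(O1 - {i}) \<union> {i} = O1" "(O1 - {i}) \<inter> {i} = {}" using True by auto
            moreover have "F {} \<ge> 0" using F_nonneg by auto
            moreover have "F {i} \<le> F (insert i X)" using Xsub i_in by (intro Fsub) auto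
            ultimately show ?thesis using O1(3) \<open>Fex = 0\<close> by simp
          next
            case False
            then have "F O1 \<le> Fex" unfolding Fex_def using O1 B0 by (intro Fex_props(2)) auto
            moreover have "F (insert i X) \<ge> 0" using F_nonneg Xsub i_in by auto
            ultimately show ?thesis using O1(3) \<open>Fex = 0\<close> by simp
          qed
          have "F (insert i X) \<le> 0" using FsD b3 by simp
          moreover have "F X \<ge> 0" "F X \<le> F (insert i X)" using F_nonneg Fins[OF Xsub i_in] Xsub by auto
          ultimately have D00: "D = 0" "F (insert i X) = 0" unfolding D_def by auto
          have "ratio F d X = ratio F d' X"
          proof
            fix t show "ratio F d X t = ratio F d' X t"
            proof (cases "t = i")
              case True
              then show ?thesis using D00 over c0 d'i unfolding D_def ratio_def by auto
            qed (rule ratio_eq)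
          qed
          then have "greedy_next n F d X = greedy_next n F d' X" unfolding greedy_next_def by simp
          then have gdj: "gx n F d j = i" using j chiX unfolding gx_def X_def by simp
          then have "chi n F d j = insert i X" using gx_spec[of j n F d] j chiX by auto
          then have "F (chi n F d j) \<le> Fstar n F B d / 2" using D00 Fs0 by simp
          then have "j \<le> kcut n F B d" using j by (intro kcut_ge) auto
          then have "winner n F B d i" using j gdj by (auto simp: winner_def)
          then show ?thesis using \<open>\<not> winner n F B d i\<close> by simp
        qed
      qed
      then show ?thesis using u0 pay' True unfolding utility_def d'_def by simp
    qed
  qed
qed

end
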